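(* Let $\alpha:[r]\to[m]$, $\alpha':[r']\to[m]$ be increasing and $\beta:[r]\to[n]$, $\beta':[r']\to[n]$ injective. If there exist $L\in L_m(P_m)$ and $R\in L_n(P_n)$ with $L\,\Pi(\alpha,\beta)=\Pi(\alpha',\beta')\,R$, then $\Pi(\alpha,\beta)=\Pi(\alpha',\beta')$.
   Context: $\mathbb{F}$ is the field with two elements, $[n]=\{1,\dots,n\}$, $e_{n,i}$ standard basis column vectors, $I_n$ identity. $P_n=\{(i,j):i,j\in[n],i>j\}$ and $L_n(P_n)=I_n+\mathrm{span}\{e_{n,i}e_{n,j}^{\top}:i>j\}$ is the group of lower unitriangular matrices. $\Pi(\alpha,\beta)=\sum_{i=1}^re_{m,\alpha(i)}e_{n,\beta(i)}^{\top}\in\mathbb{F}^{m\times n}$ (an incomplete permutation matrix). *)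

theory Defs
  imports "Jordan_Normal_Form.Matrix" "HOL-Library.Z2"
begin

text \<open>The field with two elements is the type bit (HOL-Library.Z2).
  Indices are 0-based: [n] = {1..n} is rendered as {0..<n}.\<close>

definition lower_unitri :: "nat \<Rightarrow> bit mat set" where
  "lower_unitri n = {L. L \<in> carrier_mat n n
     \<and> (\<forall>i<n. L $$ (i, i) = 1)
     \<and> (\<forall>i<n. \<forall>j<n. i < j \<longrightarrow> L $$ (i, j) = 0)}"

definition Pim :: "nat \<Rightarrow> nat \<Rightarrow> nat \<Rightarrow> (nat \<Rightarrow> nat) \<Rightarrow> (nat \<Rightarrow> nat) \<Rightarrow> bit mat" where
  "Pim m n r \<alpha> \<beta> = mat m n (\<lambda>(i, j). \<Sum>k<r. if \<alpha> k = i \<and> \<beta> k = j then 1 else 0)"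

end

theory Submission
  imports Defs
begin

lemma bit01: "(x::bit) \<noteq> 1 \<Longrightarrow> x = 0"
  by simp

lemma main_abs:
  fixes a a' L R :: "nat \<Rightarrow> nat \<Rightarrow> bit"
  assumes ru: "\<And>i j j'. i<m \<Longrightarrow> j<n \<Longrightarrow> j'<n \<Longrightarrow> a i j = 1 \<Longrightarrow> a i j' = 1 \<Longrightarrow> j = j'"
  and ru': "\<And>i j j'. i<m \<Longrightarrow> j<n \<Longrightarrow> j'<n \<Longrightarrow> a' i j = 1 \<Longrightarrow> a' i j' = 1 \<Longrightarrow> j = j'"
  and cu: "\<And>i i' j. i<m \<Longrightarrow> i'<m \<Longrightarrow> j<n \<Longrightarrow> a i j = 1 \<Longrightarrow> a i' j = 1 \<Longrightarrow> i = i'"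
  and cu': "\<And>i i' j. i<m \<Longrightarrow> i'<m \<Longrightarrow> j<n \<Longrightarrow> a' i j = 1 \<Longrightarrow> a' i' j = 1 \<Longrightarrow> i = i'"
  and L1: "\<And>i. i<m \<Longrightarrow> L i i = 1"
  and L0: "\<And>i k. i<m \<Longrightarrow> k<m \<Longrightarrow> i<k \<Longrightarrow> L i k = 0"
  and R1: "\<And>i. i<n \<Longrightarrow> R i i = 1"
  and R0: "\<And>i k. i<n \<Longrightarrow> k<n \<Longrightarrow> i<k \<Longrightarrow> R i k = 0"
  and eq: "\<And>p c. p<m \<Longrightarrow> c<n \<Longrightarrow> (\<Sum>k<m. L p k * a k c) = (\<Sum>k<n. a' p k * R k c)"
  shows "\<And>p c. p<m \<Longrightarrow> c<n \<Longrightarrow> a p c = a' p c"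
proof -
  have claim: "i \<le> m \<Longrightarrow> \<exists>R'. (\<forall>k<n. R' k k = 1) \<and> (\<forall>k c. k<n \<longrightarrow> c<n \<longrightarrow> k<c \<longrightarrow> R' k c = 0)
     \<and> (\<forall>p c. i\<le>p \<longrightarrow> p<m \<longrightarrow> c<n \<longrightarrow> (\<Sum>k\<in>{i..<m}. L p k * a k c) = (\<Sum>k<n. a' p k * R' k c))
     \<and> (\<forall>p c. p<i \<longrightarrow> c<n \<longrightarrow> a p c = a' p c)" for i
  proof (induction i)
    case 0
    show ?case
      apply (rule exI[of _ R])
      using R1 R0 eq by (auto simp: atLeast0LessThan)
  next
    case (Suc i)
    then obtain R' where R'1: "\<forall>k<n. R' k k = 1"
      and R'0: "\<forall>k c. k<n \<longrightarrow> c<n \<longrightarrow> k<c \<longrightarrow> R' k c = 0"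
      and inv: "\<forall>p c. i\<le>p \<longrightarrow> p<m \<longrightarrow> c<n \<longrightarrow> (\<Sum>k\<in>{i..<m}. L p k * a k c) = (\<Sum>k<n. a' p k * R' k c)"
      and prev: "\<forall>p c. p<i \<longrightarrow> c<n \<longrightarrow> a p c = a' p c" by auto
    have im: "i < m" using Suc by simp
    have split: "(\<Sum>k\<in>{i..<m}. L p k * a k c) = L p i * a i c + (\<Sum>k\<in>{Suc i..<m}. L p k * a k c)" for p c
      by (rule sum.atLeast_Suc_lessThan[OF im])
    have rowi: "a i c = (\<Sum>k<n. a' i k * R' k c)" if "c<n" for c
    proof -
      have "(\<Sum>k\<in>{Suc i..<m}. L i k * a k c) = 0"
        using L0 im by (intro sum.neutral) auto
      then show ?thesis using inv[rule_format, of i c] split[of i c] that im L1 by simp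
    qed
    show ?case
    proof (cases "\<exists>j'<n. a' i j' = 1")
      case True
      then obtain j' where j': "j' < n" "a' i j' = 1" by auto
      have a'row: "a' i k = (if k = j' then 1 else 0)" if "k<n" for k
        using ru'[OF im that j'(1)] j' by (cases "a' i k = 1") auto
      have s: "(\<Sum>k<n. a' i k * R' k c) = R' j' c" for c
      proof -
        have "(\<Sum>k<n. a' i k * R' k c) = (\<Sum>k<n. if k = j' then R' k c else 0)"
          by (rule sum.cong) (auto simp: a'row)
        also have "\<dots> = R' j' c" using j' by simp
        finally show ?thesis .
      qed
      have aij: "a i j' = 1" using rowi[OF j'(1)] s R'1 j' by simp
      have arow: "a i k = (if k = j' then 1 else 0)" if "k<n" for k
        using ru[OF im that j'(1)] aij by (cases "a i k = 1") auto
      define R2 where "R2 = (\<lambda>k c. if c = j' then (if k = j' then 1 else 0) else R' k c)"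
      show ?thesis
      proof (rule exI[of _ R2], intro conjI allI impI)
        fix k assume "k<n" then show "R2 k k = 1" using R'1 by (simp add: R2_def)
      next
        fix k c assume "k<n" "c<n" "k<c" then show "R2 k c = 0" using R'0 by (auto simp: R2_def)
      next
        fix p c assume p: "Suc i \<le> p" "p<m" "c<n"
        show "(\<Sum>k\<in>{Suc i..<m}. L p k * a k c) = (\<Sum>k<n. a' p k * R2 k c)"
        proof (cases "c = j'")
          case True
          have l: "(\<Sum>k\<in>{Suc i..<m}. L p k * a k c) = 0"
          proof (intro sum.neutral ballI)
            fix k assume "k \<in> {Suc i..<m}"
            then have "a k c \<noteq> 1" using cu[of i k j'] im aij True j' by (cases "a k c = 1") auto
            then show "L p k * a k c = 0" by simp
          qed
          have "(\<Sum>k<n. a' p k * R2 k c) = (\<Sum>k<n. if k = j' then a' p j' else 0)"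
            by (rule sum.cong) (auto simp: R2_def True)
          also have "\<dots> = a' p j'" using j' by simp
          also have "\<dots> = 0" using cu'[of i p j'] im p j' by (cases "a' p j' = 1") auto
          finally show ?thesis using l by simp
        next
          case False
          have "(\<Sum>k<n. a' p k * R2 k c) = (\<Sum>k<n. a' p k * R' k c)"
            by (rule sum.cong) (auto simp: R2_def False)
          moreover have "a i c = 0" using arow[OF p(3)] False by simp
          ultimately show ?thesis using inv[rule_format, of p c] split[of p c] p by simp
        qed
      next
        fix p c assume "p < Suc i" "c<n"
        then show "a p c = a' p c"
          using prev arow a'row by (cases "p = i") auto
      qed
    next
      case False
      have a'z: "a' i k = 0" if "k<n" for k using False that by auto
      have az: "a i c = 0" if "c<n" for c using rowi[OF that] a'z by simp
      show ?thesis
      proof (rule exI[of _ R'], intro conjI allI impI)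
        fix k assume "k<n" then show "R' k k = 1" using R'1 by simp
      next
        fix k c assume "k<n" "c<n" "k<c" then show "R' k c = 0" using R'0 by simp
      next
        fix p c assume p: "Suc i \<le> p" "p<m" "c<n"
        then show "(\<Sum>k\<in>{Suc i..<m}. L p k * a k c) = (\<Sum>k<n. a' p k * R' k c)"
          using inv[rule_format, of p c] split[of p c] az by simp
      next
        fix p c assume "p < Suc i" "c<n"
        then show "a p c = a' p c"
          using prev az a'z by (cases "p = i") auto
      qed
    qed
  qed
  fix p c assume "p<m" "c<n"
  then show "a p c = a' p c" using claim[of m] by auto
qed

lemma Pim_entry:
  assumes "i<m" "j<n" "inj_on \<alpha> {..<r}"
  shows "Pim m n r \<alpha> \<beta> $$ (i,j) = (if \<exists>k<r. \<alpha> k = i \<and> \<beta> k = j then 1 else 0)"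
proof (cases "\<exists>k<r. \<alpha> k = i \<and> \<beta> k = j")
  case True
  then obtain k0 where k0: "k0<r" "\<alpha> k0 = i" "\<beta> k0 = j" by auto
  have "(\<Sum>k<r. if \<alpha> k = i \<and> \<beta> k = j then 1 else 0) = (\<Sum>k<r. if k = k0 then (1::bit) else 0)"
    using k0 assms(3) by (intro sum.cong) (auto simp: inj_on_def)
  also have "\<dots> = 1" using k0 by simp
  finally show ?thesis using assms True by (simp add: Pim_def)
next
  case False
  then show ?thesis using assms by (auto simp: Pim_def intro!: sum.neutral)
qed

theorem lemma4:
  fixes m n r r' :: nat and \<alpha> \<alpha>' \<beta> \<beta>' :: "nat \<Rightarrow> nat"
  assumes "\<alpha> ` {..<r} \<subseteq> {..<m}" and "strict_mono_on {..<r} \<alpha>"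
    and "\<alpha>' ` {..<r'} \<subseteq> {..<m}" and "strict_mono_on {..<r'} \<alpha>'"
    and "\<beta> ` {..<r} \<subseteq> {..<n}" and "inj_on \<beta> {..<r}"
    and "\<beta>' ` {..<r'} \<subseteq> {..<n}" and "inj_on \<beta>' {..<r'}"
    and "\<exists>L \<in> lower_unitri m. \<exists>R \<in> lower_unitri n.
           L * Pim m n r \<alpha> \<beta> = Pim m n r' \<alpha>' \<beta>' * R"
  shows "Pim m n r \<alpha> \<beta> = Pim m n r' \<alpha>' \<beta>'"
proof -
  have ia: "inj_on \<alpha> {..<r}" using assms(2) strict_mono_on_imp_inj_on by blast
  have ia': "inj_on \<alpha>' {..<r'}" using assms(4) strict_mono_on_imp_inj_on by blast
  obtain L R where L: "L \<in> lower_unitri m" and R: "R \<in> lower_unitri n"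
    and e: "L * Pim m n r \<alpha> \<beta> = Pim m n r' \<alpha>' \<beta>' * R" using assms(9) by auto
  define A where "A = Pim m n r \<alpha> \<beta>"
  define A' where "A' = Pim m n r' \<alpha>' \<beta>'"
  have Ac: "A \<in> carrier_mat m n" "A' \<in> carrier_mat m n" by (auto simp: A_def A'_def Pim_def)
  have Lc: "L \<in> carrier_mat m m" and Rc: "R \<in> carrier_mat n n"
    using L R by (auto simp: lower_unitri_def)
  have Ae: "A $$ (i,j) = (if \<exists>k<r. \<alpha> k = i \<and> \<beta> k = j then 1 else 0)" if "i<m" "j<n" for i j
    using Pim_entry[OF that ia] by (simp add: A_def)
  have Ae': "A' $$ (i,j) = (if \<exists>k<r'. \<alpha>' k = i \<and> \<beta>' k = j then 1 else 0)" if "i<m" "j<n" for i j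
    using Pim_entry[OF that ia'] by (simp add: A'_def)
  have main: "A $$ (p,c) = A' $$ (p,c)" if "p<m" "c<n" for p c
  proof (rule main_abs[where a="\<lambda>i j. A $$ (i,j)" and a'="\<lambda>i j. A' $$ (i,j)"
        and L="\<lambda>i j. L $$ (i,j)" and R="\<lambda>i j. R $$ (i,j)" and m=m and n=n, OF _ _ _ _ _ _ _ _ _ that])
    fix i j j' assume "i<m" "j<n" "j'<n" "A $$ (i,j) = 1" "A $$ (i,j') = 1"
    then show "j = j'" using Ae ia by (auto split: if_splits simp: inj_on_def)
  next
    fix i j j' assume "i<m" "j<n" "j'<n" "A' $$ (i,j) = 1" "A' $$ (i,j') = 1"
    then show "j = j'" using Ae' ia' by (auto split: if_splits simp: inj_on_def)
  next
    fix i i' j assume "i<m" "i'<m" "j<n" "A $$ (i,j) = 1" "A $$ (i',j) = 1"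
    then show "i = i'" using Ae assms(6) by (auto split: if_splits simp: inj_on_def)
  next
    fix i i' j assume "i<m" "i'<m" "j<n" "A' $$ (i,j) = 1" "A' $$ (i',j) = 1"
    then show "i = i'" using Ae' assms(8) by (auto split: if_splits simp: inj_on_def)
  next
    fix i assume "i<m" then show "L $$ (i,i) = 1" using L by (simp add: lower_unitri_def)
  next
    fix i k assume "i<m" "k<m" "i<k" then show "L $$ (i,k) = 0" using L by (simp add: lower_unitri_def)
  next
    fix i assume "i<n" then show "R $$ (i,i) = 1" using R by (simp add: lower_unitri_def)
  next
    fix i k assume "i<n" "k<n" "i<k" then show "R $$ (i,k) = 0" using R by (simp add: lower_unitri_def)
  next
    fix p c assume pc: "p<m" "c<n"
    have "(L * A) $$ (p,c) = (A' * R) $$ (p,c)" using e by (simp add: A_def A'_def)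
    then show "(\<Sum>k<m. L $$ (p,k) * A $$ (k,c)) = (\<Sum>k<n. A' $$ (p,k) * R $$ (k,c))"
      using pc Lc Rc Ac by (simp add: scalar_prod_def atLeast0LessThan)
  qed
  have "A = A'" by (rule eq_matI) (use Ac main in auto)
  then show ?thesis by (simp add: A_def A'_def)
qed

end
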